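(* Let $r\ge1$. For every $N\ge1$, every $k\in\mathbb{N}$ and all $d,d'\in\mathbb{Z}$, \[\frac1N\Big|\{n<N:(\Delta^{(r)}(n),\Delta^{(r)}_k(n))=(d,d')\}\Big|\le rb\;\mathbb{P}\big(\{x\in\mathbb{X}:(\Delta^{(r)}(x),\Delta^{(r)}_k(x))=(d,d')\}\big).\] In particular $\frac1N|\{n<N:\Delta^{(r)}(n)=d\}|\le rb\,\mathbb{P}(\{x\in\mathbb{X}:\Delta^{(r)}(x)=d\})$.
   Context: Fix an integer $b\ge2$. $\mathbb{X}:=\{0,\dots,b-1\}^{\mathbb{N}}$ is the space of $b$-adic integers $x=(x_k)_{k\ge0}$ (with $x_0$ the units digit), with the product topology and the addition with carries extending addition of integers: $(x+y)_0$ and carry $c_0$ are determined by $x_0+y_0$ (if $<b$, digit $x_0+y_0$ and carry $0$; else digit $x_0+y_0-b$ and carry $1$), and inductively $(x+y)_\ell$, $c_\ell$ from $x_\ell+y_\ell+c_{\ell-1}$ in the same way. $\mathbb{N}$ is embedded in $\mathbb{X}$ by identifying $n$ with its sequence of base-$b$ digits (finitely many nonzero). $T(x):=x+1$. $\mathbb{P}$ is the normalized Haar measure on $\mathbb{X}$, i.e. the product of uniform measures on $\{0,\dots,b-1\}$ (digits i.i.d. uniform). For $k\in\mathbb{N}$, $s_k(x):=x_0+\dots+x_k$ and $\Delta_k^{(r)}(x):=s_k(x+r)-s_k(x)$. For all $x$ except finitely many, $x$ and $x+r$ differ in only finitely many digits and $\Delta^{(r)}(x):=\lim_{k\to\infty}\Delta_k^{(r)}(x)$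 is defined; for $n\in\mathbb{N}$ it equals $s(n+r)-s(n)$, where $s$ is the base-$b$ sum of digits. *)

theory Defs
  imports "HOL-Probability.Probability"
begin

text \<open>b-adic integers are represented as digit sequences x :: nat \<Rightarrow> nat (x 0 = units digit),
  with all digits in {0..<b} (the space of the Haar measure below).\<close>

fun badic_carry :: "nat \<Rightarrow> (nat \<Rightarrow> nat) \<Rightarrow> (nat \<Rightarrow> nat) \<Rightarrow> nat \<Rightarrow> nat" where
  "badic_carry b x y 0 = (if x 0 + y 0 < b then 0 else 1)"
| "badic_carry b x y (Suc l) = (if x (Suc l) + y (Suc l) + badic_carry b x y l < b then 0 else 1)"

definition badic_add :: "nat \<Rightarrow> (nat \<Rightarrow> nat) \<Rightarrow> (nat \<Rightarrow> nat) \<Rightarrow> (nat \<Rightarrow> nat)" where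
  "badic_add b x y l =
     (let t = x l + y l + (case l of 0 \<Rightarrow> 0 | Suc m \<Rightarrow> badic_carry b x y m)
      in if t < b then t else t - b)"

definition badic_of_nat :: "nat \<Rightarrow> nat \<Rightarrow> (nat \<Rightarrow> nat)" where
  "badic_of_nat b n = (\<lambda>k. n div b ^ k mod b)"

definition partial_digit_sum :: "nat \<Rightarrow> (nat \<Rightarrow> nat) \<Rightarrow> nat" where
  "partial_digit_sum k x = (\<Sum>i\<le>k. x i)"

definition Delta_k :: "nat \<Rightarrow> nat \<Rightarrow> nat \<Rightarrow> (nat \<Rightarrow> nat) \<Rightarrow> int" where
  "Delta_k b r k x =
     int (partial_digit_sum k (badic_add b x (badic_of_nat b r))) - int (partial_digit_sum k x)"

text \<open>\<Delta>^{(r)}(x) = lim_{k\<rightarrow>\<infinity>} \<Delta>_k^{(r)}(x) (an arbitrary integer at the finitely many x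
  where the limit does not exist).\<close>
definition Delta :: "nat \<Rightarrow> nat \<Rightarrow> (nat \<Rightarrow> nat) \<Rightarrow> int" where
  "Delta b r x = lim (\<lambda>k. Delta_k b r k x)"

definition haar :: "nat \<Rightarrow> (nat \<Rightarrow> nat) measure" where
  "haar b = (\<Pi>\<^sub>M i\<in>(UNIV::nat set). uniform_count_measure {0..<b})"

end

theory Submission
  imports Defs "HOL-Library.Countable_Set"
begin


lemma carry_le1: "badic_carry b x y l \<le> 1"
  by (cases l) auto

lemma add_carry_eq:
  "badic_add b x y l + b * badic_carry b x y l = x l + y l + (case l of 0 \<Rightarrow> 0 | Suc m \<Rightarrow> badic_carry b x y m)"
  by (cases l) (auto simp: badic_add_def Let_def)

lemma carry_invariant:
  "(\<Sum>i\<le>l. badic_add b x y i * b^i) + badic_carry b x y l * b^(Suc l) = (\<Sum>i\<le>l. (x i + y i) * b^i)"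
proof (induction l)
  case 0
  show ?case using add_carry_eq[of b x y 0] by (simp add: mult.commute)
next
  case (Suc l)
  have e: "badic_add b x y (Suc l) + b * badic_carry b x y (Suc l) = x (Suc l) + y (Suc l) + badic_carry b x y l"
    using add_carry_eq[of b x y "Suc l"] by simp
  have "(\<Sum>i\<le>Suc l. badic_add b x y i * b^i) + badic_carry b x y (Suc l) * b^(Suc (Suc l))
      = (\<Sum>i\<le>l. badic_add b x y i * b^i) + (badic_add b x y (Suc l) + b * badic_carry b x y (Suc l)) * b^Suc l"
    by (simp add: algebra_simps)
  also have "\<dots> = ((\<Sum>i\<le>l. badic_add b x y i * b^i) + badic_carry b x y l * b^(Suc l)) + (x (Suc l) + y (Suc l)) * b^Suc l"
    by (simp only: e) (simp add: algebra_simps)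
  also have "\<dots> = (\<Sum>i\<le>Suc l. (x i + y i) * b^i)"
    by (simp only: Suc.IH) simp
  finally show ?case .
qed

lemma digit_sum: "(\<Sum>i<m. badic_of_nat b n i * b^i) = n mod b^m"
proof (induction m)
  case 0 then show ?case by simp
next
  case (Suc m)
  have "n mod b^Suc m = b^m * (n div b^m mod b) + n mod b^m"
    by (metis mod_mult2_eq power_Suc2)
  then show ?case using Suc by (simp add: badic_of_nat_def mult.commute)
qed

lemma low_agree:
  assumes "\<forall>i\<le>l. x i = x' i"
  shows "badic_carry b x y l = badic_carry b x' y l \<and> badic_add b x y l = badic_add b x' y l"
  using assms
proof (induction l)
  case 0 then show ?case by (simp add: badic_add_def)
next
  case (Suc l)
  then have "badic_carry b x y l = badic_carry b x' y l" by auto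
  with Suc.prems show ?case by (simp add: badic_add_def)
qed

lemma tail_zero:
  assumes "badic_carry b z y l = 0" "\<forall>i>l. y i = 0" "\<forall>i. z i < b"
  shows "badic_carry b z y (l + j) = 0 \<and> badic_add b z y (Suc (l + j)) = z (Suc (l+j))"
proof (induction j)
  case 0 then show ?case using assms by (simp add: badic_add_def)
next
  case (Suc j)
  then have c: "badic_carry b z y (Suc (l + j)) = 0" using assms by simp
  then show ?case using assms by (simp add: badic_add_def)
qed

lemma digits_of_nat_lt: "b \<ge> 1 \<Longrightarrow> badic_of_nat b n i < b"
  by (simp add: badic_of_nat_def)

lemma digit_zero: "b \<ge> 1 \<Longrightarrow> r < b^m \<Longrightarrow> m \<le> i \<Longrightarrow> badic_of_nat b r i = 0"
proof -
  assume "b \<ge> 1" "r < b^m" "m \<le> i"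
  then have "b^m \<le> b^i" by (simp add: power_increasing)
  then show ?thesis using \<open>r < b^m\<close> by (simp add: badic_of_nat_def)
qed



lemma K2:
  assumes "m \<ge> 1" "n + r < b^m"
  shows "badic_carry b (badic_of_nat b n) (badic_of_nat b r) (m - 1) = 0"
proof -
  let ?l = "m - 1"
  have sm: "Suc ?l = m" using assms by simp
  have le: "{..?l} = {..<m}" using sm by auto
  have "(\<Sum>i\<le>?l. (badic_of_nat b n i + badic_of_nat b r i) * b^i) = n mod b^m + r mod b^m"
    unfolding le by (simp only: distrib_right sum.distrib digit_sum)
  also have "\<dots> = n + r" using assms by simp
  finally have h: "badic_carry b (badic_of_nat b n) (badic_of_nat b r) ?l * b^m \<le> n + r"
    using carry_invariant[where l="?l" and b=b and x="badic_of_nat b n" and y="badic_of_nat b r"] sm by simp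
  show ?thesis
  proof (rule ccontr)
    assume "badic_carry b (badic_of_nat b n) (badic_of_nat b r) ?l \<noteq> 0"
    then have "badic_carry b (badic_of_nat b n) (badic_of_nat b r) ?l = 1"
      using carry_le1[of b "badic_of_nat b n" "badic_of_nat b r" ?l] by linarith
    with h assms(2) show False by simp
  qed
qed

lemma K1:
  assumes b: "b \<ge> 1" and m: "m \<ge> 1" and xb: "\<forall>i. x i < b" and yb: "\<forall>i. y i < b"
    and agree: "\<forall>i<m. y i = x i" and r: "r < b^m"
    and c: "badic_carry b x (badic_of_nat b r) (m - 1) = 0"
  shows "Delta_k b r k y = Delta_k b r k x"
proof -
  let ?R = "badic_of_nat b r"
  have cy: "badic_carry b y ?R (m - 1) = 0"
    using low_agree[of "m-1" y x b ?R] agree c m by auto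
  have Rz: "\<forall>i>m-1. ?R i = 0" using digit_zero[OF b r] m by auto
  have tm: "int (badic_add b y ?R i) - int (y i) = int (badic_add b x ?R i) - int (x i)" for i
  proof (cases "i < m")
    case True
    then have "badic_add b y ?R i = badic_add b x ?R i" using low_agree[of i y x b ?R] agree by auto
    then show ?thesis using True agree by simp
  next
    case False
    then obtain j where i: "i = Suc (m - 1 + j)" using m
      by (metis Suc_diff_1 add_Suc le_Suc_ex le_eq_less_or_eq less_le_trans not_less zero_less_one)
    show ?thesis using tail_zero[OF cy Rz yb, of j] tail_zero[OF c Rz xb, of j] i by simp
  qed
  show ?thesis unfolding Delta_k_def partial_digit_sum_def
    by (simp add: of_nat_sum sum_subtractf[symmetric] tm)
qed

lemma K3:
  assumes b: "b \<ge> 2" and xb: "\<forall>i. x i < b" and nE: "\<not> (\<exists>m. \<forall>i\<ge>m. x i = b - 1)"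
  shows "\<exists>m\<ge>1. r < b^m \<and> badic_carry b x (badic_of_nat b r) (m - 1) = 0"
proof -
  have "r < 2^r" by (rule less_exp)
  also have "\<dots> \<le> b^r" using b by (simp add: power_mono)
  finally have r: "r < b^r" .
  obtain j where j: "j \<ge> r" "x j \<noteq> b - 1" using nE by auto
  have xj: "x j + 1 < b" using j xb[rule_format, of j] by auto
  have Rj: "badic_of_nat b r j = 0" using digit_zero[of b r r j] b r j by auto
  have "badic_carry b x (badic_of_nat b r) j = 0"
  proof (cases j)
    case 0 then show ?thesis using xj Rj by simp
  next
    case (Suc j')
    then show ?thesis using xj Rj carry_le1[of b x "badic_of_nat b r" j'] by simp
  qed
  moreover have "r < b^(Suc j)"
    using r b j power_increasing[of r "Suc j" b] by simp
  ultimately show ?thesis by (intro exI[of _ "Suc j"]) auto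
qed



definition cylL :: "nat \<Rightarrow> nat list \<Rightarrow> (nat \<Rightarrow> nat) set" where
  "cylL b l = {y \<in> space (haar b). \<forall>i<length l. y i = l ! i}"

lemma space_haar: "space (haar b) = {x. \<forall>i. x i < b}"
  by (auto simp: haar_def space_PiM space_uniform_count_measure PiE_UNIV_domain)

lemma prob_haar: "b \<ge> 1 \<Longrightarrow> prob_space (haar b)"
  unfolding haar_def by (rule prob_space_PiM) (auto intro!: prob_space_uniform_count_measure)

lemma cylL_emb:
  "cylL b l = prod_emb UNIV (\<lambda>_. uniform_count_measure {0..<b}) {..<length l} (Pi\<^sub>E {..<length l} (\<lambda>i. {l ! i}))"
  unfolding cylL_def haar_def prod_emb_def
  by (auto simp: space_PiM PiE_iff restrict_def extensional_def)

lemma cylL_props: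
  assumes b: "b \<ge> 1" and l: "\<forall>i<length l. l ! i < b"
  shows "cylL b l \<in> sets (haar b) \<and> measure (haar b) (cylL b l) = (1 / real b) ^ length l"
proof -
  interpret U: prob_space "uniform_count_measure {0..<b}"
    using b by (auto intro!: prob_space_uniform_count_measure)
  interpret P: product_prob_space "\<lambda>_. uniform_count_measure {0..<b}" UNIV
    by unfold_locales
  have s: "\<And>i. i \<in> {..<length l} \<Longrightarrow> {l ! i} \<in> sets (uniform_count_measure {0..<b})"
    using l by (auto simp: sets_uniform_count_measure)
  have "cylL b l \<in> sets (haar b)"
    unfolding cylL_emb haar_def using s by (intro sets_PiM_I) auto
  moreover have "measure (haar b) (cylL b l) = (\<Prod>i\<in>{..<length l}. measure (uniform_count_measure {0..<b}) {l ! i})"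
    unfolding cylL_emb haar_def using s by (intro P.measure_PiM_emb) auto
  moreover have "\<And>i. i \<in> {..<length l} \<Longrightarrow> measure (uniform_count_measure {0..<b}) {l ! i} = 1 / real b"
    using l by (subst measure_uniform_count_measure) auto
  ultimately show ?thesis by simp
qed



abbreviation seqD :: "nat \<Rightarrow> nat \<Rightarrow> (nat \<Rightarrow> nat) \<Rightarrow> nat \<Rightarrow> int" where
  "seqD b r x \<equiv> (\<lambda>k. Delta_k b r k x)"

lemma cyl_map_mem: "x \<in> space (haar b) \<Longrightarrow> x \<in> cylL b (map x [0..<m])"
  by (simp add: cylL_def)

lemma cyl_map_ok: "x \<in> space (haar b) \<Longrightarrow> \<forall>i<length (map x [0..<m]). map x [0..<m] ! i < b"
  by (simp add: space_haar)

lemma singleton_sets: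
  assumes b: "b \<ge> 1" and x: "x \<in> space (haar b)"
  shows "{x} \<in> sets (haar b)"
proof -
  have "{x} = (\<Inter>m\<in>UNIV. cylL b (map x [0..<m]))"
  proof
    show "{x} \<subseteq> (\<Inter>m\<in>UNIV. cylL b (map x [0..<m]))" using x cyl_map_mem by auto
    show "(\<Inter>m\<in>UNIV. cylL b (map x [0..<m])) \<subseteq> {x}"
    proof
      fix y assume "y \<in> (\<Inter>m\<in>UNIV. cylL b (map x [0..<m]))"
      then have "\<forall>m. \<forall>i<m. y i = x i" by (auto simp: cylL_def)
      then have "y = x" by (intro ext) (metis lessI)
      then show "y \<in> {x}" by simp
    qed
  qed
  also have "\<dots> \<in> sets (haar b)"
    using cylL_props[OF b cyl_map_ok[OF x]] by (intro sets.countable_INT') auto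
  finally show ?thesis .
qed

lemma A_sets:
  fixes P :: "(nat \<Rightarrow> int) \<Rightarrow> bool"
  assumes b: "b \<ge> 2" and r: "r \<ge> 1"
  shows "{x \<in> space (haar b). P (seqD b r x)} \<in> sets (haar b)"
proof -
  let ?A = "{x \<in> space (haar b). P (seqD b r x)}"
  define E where "E = {x \<in> space (haar b). \<exists>m. \<forall>i\<ge>m. x i = b - 1}"
  define F where "F = {cylL b l | l. (\<forall>i<length l. l ! i < b) \<and> cylL b l \<subseteq> ?A}"
  have b1: "b \<ge> 1" using b by simp
  have "?A \<subseteq> \<Union>F \<union> (?A \<inter> E)"
  proof
    fix x assume xA: "x \<in> ?A"
    show "x \<in> \<Union>F \<union> (?A \<inter> E)"
    proof (cases "x \<in> E")
      case True then show ?thesis using xA by simp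
    next
      case False
      have xs: "x \<in> space (haar b)" and xb: "\<forall>i. x i < b" using xA by (auto simp: space_haar)
      then have "\<not> (\<exists>m. \<forall>i\<ge>m. x i = b - 1)" using False by (simp add: E_def)
      then obtain m where m: "m \<ge> 1" "r < b^m" "badic_carry b x (badic_of_nat b r) (m - 1) = 0"
        using K3[OF b xb] by blast
      have "cylL b (map x [0..<m]) \<subseteq> ?A"
      proof
        fix y assume y: "y \<in> cylL b (map x [0..<m])"
        then have ys: "y \<in> space (haar b)" and yb: "\<forall>i. y i < b" and ag: "\<forall>i<m. y i = x i"
          by (auto simp: cylL_def space_haar)
        have "seqD b r y = seqD b r x" using K1[OF b1 m(1) xb yb ag m(2) m(3)] by auto
        then show "y \<in> ?A" using ys xA by simp
      qed
      then have "cylL b (map x [0..<m]) \<in> F" unfolding F_def using cyl_map_ok[OF xs] by blast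
      then show ?thesis using cyl_map_mem[OF xs] by blast
    qed
  qed
  moreover have "\<Union>F \<subseteq> ?A" unfolding F_def by blast
  ultimately have eq: "?A = \<Union>F \<union> (?A \<inter> E)" by blast
  have cF: "countable F"
    by (rule countable_subset[of _ "range (cylL b)"]) (auto simp: F_def)
  have sF: "F \<subseteq> sets (haar b)" unfolding F_def using cylL_props[OF b1] by auto
  have cE: "countable E"
  proof (rule countable_subset[of _ "range (\<lambda>l i. if i < length l then l ! i else b - 1)"])
    show "E \<subseteq> range (\<lambda>l i. if i < length l then l ! i else b - 1)"
    proof
      fix x assume "x \<in> E"
      then obtain m where m: "\<forall>i\<ge>m. x i = b - 1" by (auto simp: E_def)
      have "x = (\<lambda>i. if i < length (map x [0..<m]) then map x [0..<m] ! i else b - 1)"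
        using m by (intro ext) auto
      then show "x \<in> range (\<lambda>l i. if i < length l then l ! i else b - 1)" by blast
    qed
  qed simp
  have "?A \<inter> E \<in> sets (haar b)"
    by (rule sets.countable) (auto intro!: singleton_sets[OF b1] countable_subset[OF _ cE])
  moreover have "\<Union>F \<in> sets (haar b)" using cF sF by (rule sets.countable_Union)
  ultimately show ?thesis by (subst eq) auto
qed



lemma main_gen:
  fixes P :: "(nat \<Rightarrow> int) \<Rightarrow> bool"
  assumes b: "b \<ge> 2" and r: "r \<ge> 1" and N: "N \<ge> 1"
  shows "real (card {n. n < N \<and> P (seqD b r (badic_of_nat b n))}) / real N
     \<le> real (r * b) * measure (haar b) {x \<in> space (haar b). P (seqD b r x)}"
proof -
  let ?A = "{x \<in> space (haar b). P (seqD b r x)}"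
  define S where "S = {n. n < N \<and> P (seqD b r (badic_of_nat b n))}"
  define m where "m = (LEAST m. N + r - 1 < b^m)"
  have b1: "b \<ge> 1" using b by simp
  interpret prob_space "haar b" using prob_haar[OF b1] .
  have ex: "N + r - 1 < b^(N + r - 1)"
  proof -
    have "N + r - 1 < 2^(N + r - 1)" by (rule less_exp)
    also have "\<dots> \<le> b^(N + r - 1)" using b by (simp add: power_mono)
    finally show ?thesis .
  qed
  have m1: "N + r - 1 < b^m" unfolding m_def by (rule LeastI[of _ "N + r - 1"]) (rule ex)
  have mpos: "m \<ge> 1"
  proof (rule ccontr)
    assume "\<not> m \<ge> 1" then have "m = 0" by simp
    with m1 N r show False by simp
  qed
  have "\<not> (N + r - 1 < b^(m - 1))" unfolding m_def
    by (rule not_less_Least) (use mpos m_def in simp)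
  then have "b^(m-1) \<le> N + r - 1" by simp
  also have "\<dots> \<le> r * N"
  proof -
    have e: "r * N = r * (N - 1) + r" using N by (cases N) auto
    have "N - 1 \<le> r * (N - 1)" using r by simp
    then show ?thesis using e N by linarith
  qed
  finally have bm: "b^m \<le> r * b * N"
  proof -
    assume h: "b^(m-1) \<le> r * N"
    have "b^m = b * b^(m-1)" using mpos by (metis Suc_diff_1 less_le_trans power_Suc zero_less_one)
    also have "\<dots> \<le> b * (r * N)" using h by simp
    finally show ?thesis by (simp add: mult_ac)
  qed
  define C where "C n = cylL b (map (badic_of_nat b n) [0..<m])" for n
  have dig_ok: "\<forall>i<length (map (badic_of_nat b n) [0..<m]). map (badic_of_nat b n) [0..<m] ! i < b" for n
    using b1 by (simp add: digits_of_nat_lt)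
  have Cs: "C n \<in> sets (haar b)" and Cm: "measure (haar b) (C n) = (1 / real b) ^ m" for n
    using cylL_props[OF b1 dig_ok[of n]] by (auto simp: C_def)
  have nlt: "n < b^m" if "n \<in> S" for n using that m1 by (auto simp: S_def)
  have CA: "C n \<subseteq> ?A" if nS: "n \<in> S" for n
  proof
    fix y assume "y \<in> C n"
    then have ys: "y \<in> space (haar b)" and yb: "\<forall>i. y i < b"
      and ag: "\<forall>i<m. y i = badic_of_nat b n i"
      by (auto simp: C_def cylL_def space_haar)
    have nr: "n + r < b^m" using nS m1 by (auto simp: S_def)
    have "r < b^m" using nr by simp
    moreover have "badic_carry b (badic_of_nat b n) (badic_of_nat b r) (m - 1) = 0" using K2[OF mpos nr] .
    ultimately have "seqD b r y = seqD b r (badic_of_nat b n)"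
      using K1[OF b1 mpos _ yb ag] b1 by (auto simp: digits_of_nat_lt)
    then show "y \<in> ?A" using ys nS by (simp add: S_def)
  qed
  have disj: "disjoint_family_on C S"
  unfolding disjoint_family_on_def
  proof (intro ballI impI)
    fix n n' assume nn: "n \<in> S" "n' \<in> S" "n \<noteq> n'"
    show "C n \<inter> C n' = {}"
    proof (rule ccontr)
      assume "C n \<inter> C n' \<noteq> {}"
      then obtain y where "y \<in> C n" "y \<in> C n'" by blast
      then have "\<forall>i<m. badic_of_nat b n i = badic_of_nat b n' i" by (auto simp: C_def cylL_def)
      then have "(\<Sum>i<m. badic_of_nat b n i * b^i) = (\<Sum>i<m. badic_of_nat b n' i * b^i)" by simp
      then have "n mod b^m = n' mod b^m" by (simp add: digit_sum)
      then show False using nlt[OF nn(1)] nlt[OF nn(2)] nn(3) by simp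
    qed
  qed
  have fS: "finite S" unfolding S_def by simp
  have "measure (haar b) (\<Union>n\<in>S. C n) = (\<Sum>n\<in>S. measure (haar b) (C n))"
    using fS Cs disj by (intro finite_measure_finite_Union) auto
  also have "\<dots> = real (card S) * (1 / real b) ^ m" by (simp add: Cm)
  finally have U: "real (card S) * (1 / real b) ^ m \<le> measure (haar b) ?A"
    by (metis (no_types, lifting) A_sets[OF b r] CA UN_least finite_measure_mono)
  have bpos: "real b > 0" using b by simp
  have "real (card S) / real N = real (card S) * real (r * b) / (real (r * b) * real N)"
    using b r by simp
  also have "\<dots> \<le> real (card S) * real (r * b) / real (b^m)"
  proof (rule divide_left_mono)
    show "real (b^m) \<le> real (r * b) * real N" using bm by (metis of_nat_le_iff of_nat_mult)
    show "0 \<le> real (card S) * real (r * b)" by simp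
    show "0 < real (r * b) * real N * real (b^m)" using b r N by simp
  qed
  also have "\<dots> = real (r * b) * (real (card S) * (1 / real b) ^ m)"
    by (simp add: power_divide field_simps)
  also have "\<dots> \<le> real (r * b) * measure (haar b) ?A"
    using U by (intro mult_left_mono) auto
  finally show ?thesis by (simp add: S_def)
qed


theorem mainTheorem4:
  fixes b r N k :: nat and d d' :: int
  assumes "b \<ge> 2" and "r \<ge> 1" and "N \<ge> 1"
  shows "real (card {n. n < N \<and> Delta b r (badic_of_nat b n) = d
                        \<and> Delta_k b r k (badic_of_nat b n) = d'}) / real N
           \<le> real (r * b) * measure (haar b)
                {x \<in> space (haar b). Delta b r x = d \<and> Delta_k b r k x = d'}
         \<and> real (card {n. n < N \<and> Delta b r (badic_of_nat b n) = d}) / real N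
           \<le> real (r * b) * measure (haar b) {x \<in> space (haar b). Delta b r x = d}"
  proof (rule conjI)
  show "real (card {n. n < N \<and> Delta b r (badic_of_nat b n) = d
                        \<and> Delta_k b r k (badic_of_nat b n) = d'}) / real N
           \<le> real (r * b) * measure (haar b)
                {x \<in> space (haar b). Delta b r x = d \<and> Delta_k b r k x = d'}"
    using main_gen[OF assms, of "\<lambda>s. lim s = d \<and> s k = d'"] by (simp add: Delta_def)
  show "real (card {n. n < N \<and> Delta b r (badic_of_nat b n) = d}) / real N
           \<le> real (r * b) * measure (haar b) {x \<in> space (haar b). Delta b r x = d}"
    using main_gen[OF assms, of "\<lambda>s. lim s = d"] by (simp add: Delta_def)
qed

end
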